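(* For every integer $g\ge 3$, the order of a $[1,2;g]$-mixed cage is $\frac{g^2+1}{2}$ if $g$ is odd and $\frac{g^2}{2}$ if $g$ is even.
   Context: A mixed graph is a finite simple graph that may contain both edges and arcs. A $[z,r;g]$-mixed graph is a mixed graph in which every vertex is the tail of exactly $z$ arcs, the head of exactly $z$ arcs, and is incident with exactly $r$ edges, and whose girth is $g$. Walks traverse edges in either direction and arcs only in their direction; a cycle is a closed walk with no repeated vertices (other than start = end) and no repeated edge or arc; the girth is the length of a shortest cycle. A $[z,r;g]$-mixed cage is a $[z,r;g]$-mixed graph of minimum order. *)

theory Defs
  imports Main
begin

definition mixed_graph :: "'a set \<Rightarrow> ('a \<Rightarrow> 'a \<Rightarrow> bool) \<Rightarrow> ('a \<Rightarrow> 'a \<Rightarrow> bool) \<Rightarrow> bool" where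
  "mixed_graph V E A \<longleftrightarrow>
     finite V \<and>
     (\<forall>u v. E u v \<longrightarrow> u \<in> V \<and> v \<in> V) \<and>
     (\<forall>u v. A u v \<longrightarrow> u \<in> V \<and> v \<in> V) \<and>
     (\<forall>u v. E u v \<longrightarrow> E v u) \<and>
     (\<forall>u. \<not> E u u) \<and> (\<forall>u. \<not> A u u) \<and>
     (\<forall>u v. \<not> (E u v \<and> A u v)) \<and>
     (\<forall>u v. \<not> (A u v \<and> A v u))"

definition mstep :: "('a \<Rightarrow> 'a \<Rightarrow> bool) \<Rightarrow> ('a \<Rightarrow> 'a \<Rightarrow> bool) \<Rightarrow> 'a \<Rightarrow> 'a \<Rightarrow> bool" where
  "mstep E A u v \<longleftrightarrow> E u v \<or> A u v"

(* the edge or arc used by a step u -> v (unambiguous in a simple mixed graph) *)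
definition mobj :: "('a \<Rightarrow> 'a \<Rightarrow> bool) \<Rightarrow> 'a \<Rightarrow> 'a \<Rightarrow> 'a set + ('a \<times> 'a)" where
  "mobj E u v = (if E u v then Inl {u, v} else Inr (u, v))"

definition mixed_cycle :: "('a \<Rightarrow> 'a \<Rightarrow> bool) \<Rightarrow> ('a \<Rightarrow> 'a \<Rightarrow> bool) \<Rightarrow> 'a list \<Rightarrow> bool" where
  "mixed_cycle E A vs \<longleftrightarrow>
     vs \<noteq> [] \<and> distinct vs \<and>
     (\<forall>i < length vs. mstep E A (vs ! i) (vs ! ((i + 1) mod length vs))) \<and>
     distinct (map (\<lambda>i. mobj E (vs ! i) (vs ! ((i + 1) mod length vs))) [0..<length vs])"

definition has_girth :: "('a \<Rightarrow> 'a \<Rightarrow> bool) \<Rightarrow> ('a \<Rightarrow> 'a \<Rightarrow> bool) \<Rightarrow> nat \<Rightarrow> bool" where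
  "has_girth E A g \<longleftrightarrow>
     (\<exists>vs. mixed_cycle E A vs \<and> length vs = g) \<and>
     (\<forall>vs. mixed_cycle E A vs \<longrightarrow> g \<le> length vs)"

definition zrg_mixed_graph :: "'a set \<Rightarrow> ('a \<Rightarrow> 'a \<Rightarrow> bool) \<Rightarrow> ('a \<Rightarrow> 'a \<Rightarrow> bool) \<Rightarrow> nat \<Rightarrow> nat \<Rightarrow> nat \<Rightarrow> bool" where
  "zrg_mixed_graph V E A z r g \<longleftrightarrow>
     mixed_graph V E A \<and>
     (\<forall>v\<in>V. card {w\<in>V. A v w} = z \<and> card {w\<in>V. A w v} = z \<and> card {w\<in>V. E v w} = r) \<and>
     has_girth E A g"

end

theory Submission
  imports Defs
begin



lemma mod_pair_false:
  fixes i j L :: nat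
  assumes a1: "i < L" and a2: "j < L" and a3: "3 \<le> L" and a4: "i = (j+1) mod L" and a5: "j = (i+1) mod L"
  shows False
proof (cases "j + 1 < L")
  case True
  then have i1: "i = j + 1" using a4 by simp
  then have jj: "j = (j+2) mod L" using a5 by simp
  show False
  proof (cases "j + 2 < L")
    case True then show False using jj by simp
  next
    case False then have "j + 2 = L" using i1 a1 by simp
    then show False using jj a3 by simp
  qed
next
  case False
  then have "j + 1 = L" using a2 by simp
  then have "i = 0" using a4 by simp
  then have "j = 1 mod L" using a5 by simp
  then show False using \<open>j+1 = L\<close> a3 by simp
qed

lemma closed_walk_cycle:
  assumes mg: "mixed_graph V E A" and L3: "3 \<le> L" and inj: "inj_on w {..<L}" and cl: "w L = w 0"
    and st: "\<forall>i<L. mstep E A (w i) (w (Suc i))"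
  shows "mixed_cycle E A (map w [0..<L])"
proof -
  let ?vs = "map w [0..<L]"
  have nth: "\<And>i. i < L \<Longrightarrow> ?vs ! i = w i" by simp
  have wm: "w (Suc i) = w ((i+1) mod L)" if "i < L" for i
  proof (cases "Suc i = L")
    case True then show ?thesis using cl by simp
  next
    case False then show ?thesis using that by simp
  qed
  have nx: "?vs ! ((i+1) mod L) = w (Suc i)" if "i < L" for i
  proof -
    have "(i+1) mod L < L" using L3 by simp
    then show ?thesis using wm[OF that] nth by simp
  qed
  have steps: "\<forall>i < length ?vs. mstep E A (?vs ! i) (?vs ! ((i + 1) mod length ?vs))"
    using st nx nth by simp
  have dist: "distinct ?vs" using inj by (simp add: distinct_map atLeast0LessThan)
  let ?F = "\<lambda>i. mobj E (w i) (w (Suc i))"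
  have injF: "inj_on ?F {0..<L}"
  proof (rule inj_onI)
    fix i j assume i: "i \<in> {0..<L}" and j: "j \<in> {0..<L}" and eq: "?F i = ?F j"
    show "i = j"
    proof (cases "E (w i) (w (Suc i))")
      case Ei: True
      show ?thesis
      proof (cases "E (w j) (w (Suc j))")
        case Ej: True
        have "{w i, w (Suc i)} = {w j, w (Suc j)}" using eq Ei Ej by (simp add: mobj_def)
        then have "(w i = w j \<and> w (Suc i) = w (Suc j)) \<or> (w i = w (Suc j) \<and> w (Suc i) = w j)"
          by (simp add: doubleton_eq_iff)
        then show ?thesis
        proof
          assume "w i = w j \<and> w (Suc i) = w (Suc j)"
          then show ?thesis using inj i j by (auto simp: inj_on_def)
        next
          assume h: "w i = w (Suc j) \<and> w (Suc i) = w j"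
          have L0: "0 < L" using L3 by simp
          have a: "w i = w ((j+1) mod L)" using h wm j by auto
          have b: "w j = w ((i+1) mod L)" using h wm i by auto
          have a': "i = (j+1) mod L" using inj a i L0 by (auto simp: inj_on_def)
          have b': "j = (i+1) mod L" using inj b j L0 by (auto simp: inj_on_def)
          show ?thesis using mod_pair_false[OF _ _ L3 a' b'] i j by auto
        qed
      next
        case False then show ?thesis using eq Ei by (simp add: mobj_def)
      qed
    next
      case Ei: False
      show ?thesis
      proof (cases "E (w j) (w (Suc j))")
        case True then show ?thesis using eq Ei by (simp add: mobj_def)
      next
        case False
        then have "w i = w j" using eq Ei by (simp add: mobj_def)
        then show ?thesis using inj i j by (auto simp: inj_on_def)
      qed
    qed
  qed
  have meq: "map (\<lambda>i. mobj E (?vs ! i) (?vs ! ((i + 1) mod length ?vs))) [0..<length ?vs] = map ?F [0..<L]"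
  proof (rule map_cong)
    show "[0..<length ?vs] = [0..<L]" by simp
  next
    fix i assume "i \<in> set [0..<L]"
    then have "i < L" by simp
    then show "mobj E (?vs ! i) (?vs ! ((i + 1) mod length ?vs)) = ?F i"
      using nx[of i] nth[of i] by (simp only: length_map length_upt diff_zero)
  qed
  have d2: "distinct (map (\<lambda>i. mobj E (?vs ! i) (?vs ! ((i + 1) mod length ?vs))) [0..<length ?vs])"
    unfolding meq using injF by (simp add: distinct_map)
  have ne: "?vs \<noteq> []" using L3 by simp
  show ?thesis unfolding mixed_cycle_def by (intro conjI ne dist steps d2)
qed




lemma mg_facts:
  assumes "mixed_graph V E A"
  shows "E u v \<Longrightarrow> u \<in> V \<and> v \<in> V" "A u v \<Longrightarrow> u \<in> V \<and> v \<in> V"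
    "E u v \<Longrightarrow> E v u" "\<not> E u u" "\<not> A u u" "\<not> (E u v \<and> A u v)" "\<not> (A u v \<and> A v u)"
  using assms unfolding mixed_graph_def by blast+

lemma cycle_len3:
  assumes mg: "mixed_graph V E A" and c: "mixed_cycle E A vs"
  shows "3 \<le> length vs"
proof -
  have ne: "vs \<noteq> []" and st: "\<forall>i < length vs. mstep E A (vs ! i) (vs ! ((i + 1) mod length vs))"
    and d: "distinct (map (\<lambda>i. mobj E (vs ! i) (vs ! ((i + 1) mod length vs))) [0..<length vs])"
    using c unfolding mixed_cycle_def by blast+
  have "length vs \<noteq> 1"
  proof
    assume l: "length vs = 1"
    have "mstep E A (vs ! 0) (vs ! 0)" using st l by auto
    then show False using mg_facts[OF mg] unfolding mstep_def by blast
  qed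
  moreover have "length vs \<noteq> 2"
  proof
    assume l: "length vs = 2"
    have s0: "mstep E A (vs ! 0) (vs ! 1)" using st[rule_format, of 0] l by simp
    have s1: "mstep E A (vs ! 1) (vs ! 0)" using st[rule_format, of 1] l by simp
    have "[0..<length vs] = [0,1]" using l by (simp add: upt_rec)
    then have dd: "mobj E (vs ! 0) (vs ! 1) \<noteq> mobj E (vs ! 1) (vs ! 0)" using d l by simp
    show False
    proof (cases "E (vs ! 0) (vs ! 1)")
      case True
      then have "E (vs ! 1) (vs ! 0)" using mg_facts(3)[OF mg] by blast
      then show False using dd True by (simp add: mobj_def insert_commute)
    next
      case False
      then have a: "A (vs ! 0) (vs ! 1)" using s0 unfolding mstep_def by blast
      then show False using s1 mg_facts(3,6,7)[OF mg] unfolding mstep_def by blast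
    qed
  qed
  moreover have "length vs \<noteq> 0" using ne by simp
  ultimately show ?thesis by linarith
qed

lemma closed_walk_arc:
  assumes mg: "mixed_graph V E A" and gir: "\<forall>vs. mixed_cycle E A vs \<longrightarrow> g \<le> length vs"
  shows "w L = w 0 \<Longrightarrow> \<forall>i<L. mstep E A (w i) (w (Suc i)) \<Longrightarrow> t < L \<Longrightarrow> A (w t) (w (Suc t)) \<Longrightarrow> g \<le> L"
proof (induction L arbitrary: w t rule: less_induct)
  case (less L)
  note cl = less.prems(1) and st = less.prems(2) and tL = less.prems(3) and arc = less.prems(4)
  show ?case
  proof (cases "inj_on w {..<L}")
    case True
    have "L \<noteq> 1"
    proof
      assume "L = 1" then have "t = 0" using tL by simp
      then show False using arc cl \<open>L=1\<close> mg_facts(5)[OF mg] by simp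
    qed
    moreover have "L \<noteq> 2"
    proof
      assume L2: "L = 2"
      have "mstep E A (w 1) (w 2)" using st L2 by (metis lessI numeral_2_eq_2 One_nat_def)
      then have s1: "mstep E A (w 1) (w 0)" using cl L2 by simp
      show False
      proof (cases "t = 0")
        case True then have "A (w 0) (w 1)" using arc by simp
        then show False using s1 mg_facts(3,6,7)[OF mg] unfolding mstep_def by blast
      next
        case False then have "t = 1" using tL L2 by simp
        then have "A (w 1) (w 0)" using arc cl L2 by (simp add: numeral_2_eq_2)
        moreover have "mstep E A (w 0) (w 1)" using st L2 by simp
        ultimately show False using mg_facts(3,6,7)[OF mg] unfolding mstep_def by blast
      qed
    qed
    ultimately have L3: "3 \<le> L" using tL by presburger
    have "mixed_cycle E A (map w [0..<L])" using closed_walk_cycle[OF mg L3 True cl st] .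
    then show ?thesis using gir by fastforce
  next
    case False
    then obtain a b where ab: "a < b" "b < L" "w a = w b"
      unfolding inj_on_def by (metis lessThan_iff nat_neq_iff)
    let ?w1 = "\<lambda>i. w (a + i)"
    let ?L1 = "b - a"
    let ?w2 = "\<lambda>i. if i \<le> a then w i else w (i + (b - a))"
    let ?L2 = "L - (b - a)"
    have cl1: "?w1 ?L1 = ?w1 0" using ab by simp
    have st1: "\<forall>i<?L1. mstep E A (?w1 i) (?w1 (Suc i))" using st ab by simp
    have cl2: "?w2 ?L2 = ?w2 0" using ab cl by simp
    have st2: "\<forall>i<?L2. mstep E A (?w2 i) (?w2 (Suc i))"
    proof (intro allI impI)
      fix i assume i: "i < ?L2"
      show "mstep E A (?w2 i) (?w2 (Suc i))"
      proof (cases "i < a")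
        case True then show ?thesis using st ab by simp
      next
        case False
        show ?thesis
        proof (cases "i = a")
          case True
          have "mstep E A (w b) (w (Suc b))" using st ab by simp
          then show ?thesis using True ab by simp
        next
          case False
          then have "a < i" using \<open>\<not> i < a\<close> by simp
          moreover have "i + (b - a) < L" using i ab by simp
          ultimately show ?thesis using st by simp
        qed
      qed
    qed
    show ?thesis
    proof (cases "a \<le> t \<and> t < b")
      case True
      have "A (?w1 (t - a)) (?w1 (Suc (t - a)))" using arc True by (simp add: Suc_diff_le)
      moreover have "t - a < ?L1" using True by arith
      moreover have "?L1 < L" using ab by simp
      ultimately have "g \<le> ?L1" using less.IH[OF _ cl1 st1] by blast
      then show ?thesis using ab by simp
    next
      case False
      have "\<exists>t'. t' < ?L2 \<and> A (?w2 t') (?w2 (Suc t'))"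
      proof (cases "t < a")
        case True
        then show ?thesis using arc ab by (intro exI[of _ t]) simp
      next
        case False
        then have tb: "b \<le> t" using \<open>\<not> (a \<le> t \<and> t < b)\<close> by simp
        show ?thesis
        proof (cases "t = b")
          case True
          then show ?thesis using arc ab by (intro exI[of _ a]) simp
        next
          case False
          have h1: "a < t - (b - a)" "t - (b - a) + (b - a) = t" "t - (b - a) < ?L2" "Suc (t - (b - a)) + (b - a) = Suc t"
            using False tb ab tL by arith+
          show ?thesis using arc h1 by (intro exI[of _ "t - (b - a)"]) simp
        qed
      qed
      then obtain t' where "t' < ?L2" "A (?w2 t') (?w2 (Suc t'))" by blast
      moreover have "?L2 < L" using ab by simp
      ultimately have "g \<le> ?L2" using less.IH[OF _ cl2 st2] by blast
      then show ?thesis by simp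
    qed
  qed
qed




definition sg :: "('a \<Rightarrow> 'a \<Rightarrow> bool) \<Rightarrow> 'a \<Rightarrow> 'a" where "sg A x = (SOME y. A x y)"

fun epath :: "('a \<Rightarrow> 'a \<Rightarrow> bool) \<Rightarrow> 'a \<Rightarrow> 'a \<Rightarrow> nat \<Rightarrow> 'a" where
  "epath E x y 0 = x"
| "epath E x y (Suc 0) = y"
| "epath E x y (Suc (Suc i)) = (SOME z. E (epath E x y (Suc i)) z \<and> z \<noteq> epath E x y i)"

declare epath.simps(3)[simp del]

locale L12 =
  fixes V :: "'a set" and E A :: "'a \<Rightarrow> 'a \<Rightarrow> bool" and g :: nat
  assumes z: "zrg_mixed_graph V E A 1 2 g"
begin

lemma mg: "mixed_graph V E A" using z unfolding zrg_mixed_graph_def by blast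
lemma fin: "finite V" using mg unfolding mixed_graph_def by blast
lemma degA: "v \<in> V \<Longrightarrow> card {w\<in>V. A v w} = 1" using z unfolding zrg_mixed_graph_def by blast
lemma degA': "v \<in> V \<Longrightarrow> card {w\<in>V. A w v} = 1" using z unfolding zrg_mixed_graph_def by blast
lemma degE: "v \<in> V \<Longrightarrow> card {w\<in>V. E v w} = 2" using z unfolding zrg_mixed_graph_def by blast
lemma gir: "\<forall>vs. mixed_cycle E A vs \<longrightarrow> g \<le> length vs"
  using z unfolding zrg_mixed_graph_def has_girth_def by blast
lemma girw: "\<exists>vs. mixed_cycle E A vs \<and> length vs = g"
  using z unfolding zrg_mixed_graph_def has_girth_def by blast

lemma other_nb:
  assumes "x \<in> V" shows "\<exists>z. E x z \<and> z \<noteq> y"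
proof -
  obtain a b where ab: "a \<noteq> b" "{w\<in>V. E x w} = {a, b}" using degE[OF assms] by (meson card_2_iff)
  then have "E x a" "E x b" by blast+
  then show ?thesis using ab by metis
qed

lemma epath_E:
  assumes "E x y" shows "E (epath E x y i) (epath E x y (Suc i))"
proof (induction i)
  case 0 then show ?case using assms by simp
next
  case (Suc i)
  have "epath E x y (Suc i) \<in> V" using Suc mg_facts(1)[OF mg] by blast
  then have "\<exists>z. E (epath E x y (Suc i)) z \<and> z \<noteq> epath E x y i" using other_nb by blast
  then show ?case by (simp add: epath.simps(3), rule someI_ex[THEN conjunct1])
qed

lemma epath_nb:
  assumes "E x y" shows "epath E x y (Suc (Suc i)) \<noteq> epath E x y i"
proof -
  have "epath E x y (Suc i) \<in> V" using epath_E[OF assms, of i] mg_facts(1)[OF mg] by blast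
  then have "\<exists>z. E (epath E x y (Suc i)) z \<and> z \<noteq> epath E x y i" using other_nb by blast
  then show ?thesis by (simp add: epath.simps(3), rule someI_ex[THEN conjunct2])
qed

lemma epath_V:
  assumes "E x y" shows "epath E x y i \<in> V"
  using epath_E[OF assms, of i] mg_facts(1)[OF mg] by blast

lemma epath_dist:
  assumes xy: "E x y" and ij: "i < j" "j < i + g"
  shows "epath E x y i \<noteq> epath E x y j"
proof
  assume eq: "epath E x y i = epath E x y j"
  let ?p = "epath E x y"
  let ?P = "\<lambda>d. \<exists>i. 0 < d \<and> d < g \<and> ?p i = ?p (i + d)"
  have "?P (j - i)" using eq ij by (intro exI[of _ i]) simp
  then have Pd: "?P (LEAST d. ?P d)" by (rule LeastI)
  define d where "d = (LEAST d. ?P d)"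
  obtain i0 where i0: "0 < d" "d < g" "?p i0 = ?p (i0 + d)" using Pd unfolding d_def by blast
  have minimal: "\<not> ?P d'" if "d' < d" for d' using not_less_Least[of d' ?P] that unfolding d_def by blast
  let ?w = "\<lambda>t. ?p (i0 + t)"
  have inj: "inj_on ?w {..<d}"
  proof (rule inj_onI)
    fix s t assume s: "s \<in> {..<d}" and t: "t \<in> {..<d}" and e: "?w s = ?w t"
    show "s = t"
    proof (rule ccontr)
      assume "s \<noteq> t"
      then consider "s < t" | "t < s" by linarith
      then show False
      proof cases
        case 1
        have "?P (t - s)" using 1 e s t i0 by (intro exI[of _ "i0 + s"]) simp
        moreover have "\<not> ?P (t - s)" using 1 t by (intro minimal) simp
        ultimately show False by (rule notE[rotated])
      next
        case 2
        have "?P (s - t)" using 2 e s t i0 by (intro exI[of _ "i0 + t"]) simp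
        moreover have "\<not> ?P (s - t)" using 2 s by (intro minimal) simp
        ultimately show False by (rule notE[rotated])
      qed
    qed
  qed
  have "d \<noteq> 1"
  proof
    assume "d = 1"
    then have "E (?p i0) (?p i0)" using epath_E[OF xy, of i0] i0 by simp
    then show False using mg_facts(4)[OF mg] by blast
  qed
  moreover have "d \<noteq> 2"
  proof
    assume "d = 2"
    then have "?p i0 = ?p (Suc (Suc i0))" using i0(3) by (simp add: numeral_2_eq_2)
    then show False using epath_nb[OF xy, of i0] by simp
  qed
  ultimately have d3: "3 \<le> d" using i0 by linarith
  have st: "\<forall>t<d. mstep E A (?w t) (?w (Suc t))"
    using epath_E[OF xy] unfolding mstep_def by simp
  have "mixed_cycle E A (map ?w [0..<d])"
    using closed_walk_cycle[OF mg d3 inj _ st] i0 by simp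
  then have "g \<le> length (map ?w [0..<d])" using gir by blast
  then show False using i0(2) by simp
qed

lemma sg_arc: "x \<in> V \<Longrightarrow> A x (sg A x)"
proof -
  assume x: "x \<in> V"
  have "{w\<in>V. A x w} \<noteq> {}" using degA[OF x] by (metis card.empty zero_neq_one)
  then have "\<exists>y. A x y" by blast
  then show ?thesis unfolding sg_def by (rule someI_ex)
qed

lemma sg_V: "x \<in> V \<Longrightarrow> sg A x \<in> V" using sg_arc mg_facts(2)[OF mg] by blast

lemma sg_inj: "inj_on (sg A) V"
proof (rule inj_onI)
  fix x y assume x: "x \<in> V" and y: "y \<in> V" and e: "sg A x = sg A y"
  let ?z = "sg A x"
  have zV: "?z \<in> V" using sg_V x by blast
  have "A x ?z" using sg_arc[OF x] by blast
  moreover have "A y ?z" using sg_arc[OF y] e by simp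
  ultimately have "x \<in> {w\<in>V. A w ?z}" "y \<in> {w\<in>V. A w ?z}" using x y by auto
  then show "x = y" using degA'[OF zV] card_1_singletonE by (metis singletonD)
qed

lemma sgp_V: "x \<in> V \<Longrightarrow> (sg A ^^ j) x \<in> V"
  by (induction j) (auto simp: sg_V)

lemma sgp_inj: "inj_on (sg A ^^ j) V"
proof (induction j)
  case 0 then show ?case by simp
next
  case (Suc j)
  have "inj_on (sg A \<circ> (sg A ^^ j)) V"
    using Suc sg_inj sgp_V by (intro comp_inj_on) (auto intro: inj_on_subset)
  then show ?case by (simp only: funpow.simps(2))
qed

end



context L12 begin

lemma core:
  assumes xy: "E x y"
    and eq: "(sg A ^^ j1) (epath E x y i1) = (sg A ^^ j2) (epath E x y i2)"
    and j: "j2 \<le> j1" and ne: "(i1, j1) \<noteq> (i2, j2)"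
    and bd: "(j1 - j2) + (if i2 \<le> i1 then i1 - i2 else i2 - i1) < g"
  shows False
proof -
  let ?s = "sg A" and ?p = "epath E x y"
  define d where "d = j1 - j2"
  define dist where "dist = (if i2 \<le> i1 then i1 - i2 else i2 - i1)"
  have j1: "j1 = j2 + d" using j d_def by simp
  have "(?s ^^ j1) (?p i1) = (?s ^^ j2) ((?s ^^ d) (?p i1))" unfolding j1 by (simp add: funpow_add)
  then have "(?s ^^ j2) ((?s ^^ d) (?p i1)) = (?s ^^ j2) (?p i2)" using eq by simp
  then have sd: "(?s ^^ d) (?p i1) = ?p i2"
    using sgp_inj[of j2] sgp_V epath_V[OF xy] by (meson inj_onD)
  show False
  proof (cases "d = 0")
    case True
    then have "?p i1 = ?p i2" using sd by simp
    moreover have "i1 \<noteq> i2" using True ne j1 by simp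
    moreover have "dist < g" using bd True d_def dist_def by simp
    ultimately show False
    proof (cases "i1 < i2")
      case c: True
      then have "i2 < i1 + g" using \<open>dist < g\<close> unfolding dist_def by simp
      then show False using epath_dist[OF xy c] \<open>?p i1 = ?p i2\<close> by simp
    next
      case c: False
      then have c': "i2 < i1" using \<open>i1 \<noteq> i2\<close> by simp
      then have "i1 < i2 + g" using \<open>dist < g\<close> unfolding dist_def by simp
      then show False using epath_dist[OF xy c'] \<open>?p i1 = ?p i2\<close> by simp
    qed
  next
    case False
    define q where "q = (\<lambda>s. if i2 \<le> i1 then ?p (i2 + s) else ?p (i2 - s))"
    define w where "w = (\<lambda>t. if t \<le> d then (?s ^^ t) (?p i1) else q (t - d))"
    define L where "L = d + dist"
    have q0: "q 0 = ?p i2" unfolding q_def by simp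
    have qd: "q dist = ?p i1" unfolding q_def dist_def by simp
    have qE: "E (q s) (q (Suc s))" if "s < dist" for s
    proof (cases "i2 \<le> i1")
      case True then show ?thesis using epath_E[OF xy, of "i2 + s"] unfolding q_def by simp
    next
      case False
      then have "i2 - s = Suc (i2 - Suc s)" using that unfolding dist_def by simp
      then show ?thesis using False epath_E[OF xy, of "i2 - Suc s"] mg_facts(3)[OF mg] unfolding q_def
        by simp
    qed
    have wq: "w t = q (t - d)" if "d \<le> t" for t
      using that sd q0 unfolding w_def by (cases "t = d") auto
    have cl: "w L = w 0"
    proof (cases "dist = 0")
      case True
      then have "i1 = i2" unfolding dist_def by (simp split: if_splits)
      then show ?thesis using True sd unfolding w_def L_def by simp
    next
      case False
      then show ?thesis using wq[of L] qd unfolding L_def by (simp add: w_def)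
    qed
    have st: "\<forall>t<L. mstep E A (w t) (w (Suc t))"
    proof (intro allI impI)
      fix t assume t: "t < L"
      show "mstep E A (w t) (w (Suc t))"
      proof (cases "t < d")
        case True
        have "(?s ^^ t) (?p i1) \<in> V" using sgp_V epath_V[OF xy] by blast
        then have "A ((?s ^^ t) (?p i1)) ((?s ^^ Suc t) (?p i1))" using sg_arc by simp
        then show ?thesis using True unfolding w_def mstep_def by simp
      next
        case False
        then have "w t = q (t - d)" "w (Suc t) = q (Suc (t - d))" using wq
          by (simp, metis Suc_diff_le le_Suc_eq not_less)
        moreover have "t - d < dist" using t False unfolding L_def by simp
        ultimately show ?thesis using qE unfolding mstep_def by simp
      qed
    qed
    have arc0: "A (w 0) (w (Suc 0))"
    proof -
      have "A (?p i1) (?s (?p i1))" using sg_arc epath_V[OF xy] by blast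
      then show ?thesis using False unfolding w_def by simp
    qed
    have "0 < L" using False unfolding L_def by simp
    then have "g \<le> L" using closed_walk_arc[OF mg gir cl st _ arc0] by blast
    then show False using bd unfolding L_def d_def dist_def by simp
  qed
qed

end



lemma par_eq: fixes a1 a2 e1 e2 :: nat assumes "e1 \<le> 1" "e2 \<le> 1" "2*a1+e1 = 2*a2+e2" shows "e1 = e2 \<and> a1 = a2"
  using assms by presburger

lemma arith_dom:
  fixes e1 a1 b1 e2 a2 b2 D :: nat
  assumes e: "e1 \<le> 1" "e2 \<le> 1" and bd: "2*a1+e1 \<le> D" "2*b1+e1 \<le> D" "2*a2+e2 \<le> D" "2*b2+e2 \<le> D"
    and ne: "(e1,a1,b1) \<noteq> (e2,a2,b2)" and jj: "a2 + D - b2 \<le> a1 + D - b1"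
  shows "(a1+b1+e1, a1+D-b1) \<noteq> (a2+b2+e2, a2+D-b2) \<and>
    (a1+D-b1) - (a2+D-b2) + (if a2+b2+e2 \<le> a1+b1+e1 then (a1+b1+e1) - (a2+b2+e2) else (a2+b2+e2) - (a1+b1+e1)) \<le> D"
proof
  show "(a1+b1+e1, a1+D-b1) \<noteq> (a2+b2+e2, a2+D-b2)"
  proof
    assume h: "(a1+b1+e1, a1+D-b1) = (a2+b2+e2, a2+D-b2)"
    then have "2*a1+e1 = 2*a2+e2" "2*b1+e1 = 2*b2+e2" using bd by auto
    then show False using par_eq[OF e] ne by blast
  qed
next
  show "(a1+D-b1) - (a2+D-b2) + (if a2+b2+e2 \<le> a1+b1+e1 then (a1+b1+e1) - (a2+b2+e2) else (a2+b2+e2) - (a1+b1+e1)) \<le> D"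
    using bd jj by (simp split: if_splits) linarith
qed

lemma nform:
  fixes g :: nat assumes "3 \<le> g"
  shows "(if odd g then (g^2 + 1) div 2 else g^2 div 2) = ((g-1) div 2 + 1)^2 + (g div 2)^2"
proof (cases "odd g")
  case True
  then obtain k where k: "g = 2*k+1" by (metis oddE)
  have "(g^2+1) = 2 * ((k+1)^2 + k^2)" unfolding k by (simp add: power2_eq_square algebra_simps)
  then show ?thesis using True k by simp
next
  case False
  then obtain k where k: "g = 2*k" by (metis evenE)
  then have k1: "1 \<le> k" using assms by simp
  have a: "(g-1) div 2 + 1 = k" using k k1 by simp
  have "g^2 = 2 * (k^2 + k^2)" unfolding k by (simp add: power2_eq_square algebra_simps)
  then show ?thesis using False a k by simp
qed

context L12 begin

lemma lower:
  assumes g3: "3 \<le> g"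
  shows "((g-1) div 2 + 1)^2 + (g div 2)^2 \<le> card V"
proof -
  obtain vs where vs: "mixed_cycle E A vs" "length vs = g" using girw by blast
  have "mstep E A (vs ! 0) (vs ! ((0 + 1) mod length vs))" using vs g3 unfolding mixed_cycle_def by auto
  then have v0: "vs ! 0 \<in> V" using mg_facts(1,2)[OF mg] unfolding mstep_def by blast
  have "{w\<in>V. E (vs ! 0) w} \<noteq> {}" using degE[OF v0] by (metis card.empty zero_neq_numeral)
  then obtain v1 where xy: "E (vs ! 0) v1" by blast
  define D where "D = g - 1"
  define Dom where "Dom = ({0::nat} \<times> ({..D div 2} \<times> {..D div 2})) \<union> ({1} \<times> ({..<g div 2} \<times> {..<g div 2}))"
  define f where "f = (\<lambda>(e, a, b). (sg A ^^ (a + D - b)) (epath E (vs ! 0) v1 (a + b + e)))"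
  have mem: "e \<le> 1 \<and> 2*a+e \<le> D \<and> 2*b+e \<le> D" if "(e, a, b) \<in> Dom" for e a b
    using that unfolding Dom_def D_def by auto
  have inj: "inj_on f Dom"
  proof (rule inj_onI)
    fix p1 p2 assume p1: "p1 \<in> Dom" and p2: "p2 \<in> Dom" and eq: "f p1 = f p2"
    obtain e1 a1 b1 where t1: "p1 = (e1, a1, b1)" by (cases p1) auto
    obtain e2 a2 b2 where t2: "p2 = (e2, a2, b2)" by (cases p2) auto
    have m1: "e1 \<le> 1" "2*a1+e1 \<le> D" "2*b1+e1 \<le> D" using mem p1 t1 by blast+
    have m2: "e2 \<le> 1" "2*a2+e2 \<le> D" "2*b2+e2 \<le> D" using mem p2 t2 by blast+
    have eq': "(sg A ^^ (a1 + D - b1)) (epath E (vs ! 0) v1 (a1 + b1 + e1)) =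
               (sg A ^^ (a2 + D - b2)) (epath E (vs ! 0) v1 (a2 + b2 + e2))"
      using eq unfolding t1 t2 f_def by simp
    show "p1 = p2"
    proof (rule ccontr)
      assume "p1 \<noteq> p2"
      then have ne: "(e1,a1,b1) \<noteq> (e2,a2,b2)" using t1 t2 by simp
      have Dg: "D < g" unfolding D_def using g3 by simp
      show False
      proof (cases "a2 + D - b2 \<le> a1 + D - b1")
        case True
        note h = arith_dom[OF m1(1) m2(1) m1(2,3) m2(2,3) ne True]
        show False using core[OF xy eq' True] h Dg by linarith
      next
        case False
        then have F: "a1 + D - b1 \<le> a2 + D - b2" by simp
        have ne': "(e2,a2,b2) \<noteq> (e1,a1,b1)" using ne by metis
        note h = arith_dom[OF m2(1) m1(1) m2(2,3) m1(2,3) ne' F]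
        show False using core[OF xy eq'[symmetric] F] h Dg by linarith
      qed
    qed
  qed
  have img: "f ` Dom \<subseteq> V"
    using sgp_V epath_V[OF xy] unfolding f_def by auto
  have "card Dom \<le> card V" using card_inj_on_le[OF inj img fin] .
  moreover have "card Dom = (D div 2 + 1) * (D div 2 + 1) + (g div 2) * (g div 2)"
    unfolding Dom_def by (subst card_Un_disjoint) (auto simp: card_cartesian_product)
  ultimately show ?thesis unfolding D_def by (simp add: power2_eq_square)
qed

end



lemma KL_odd:
  fixes k a b :: int
  assumes k: "1 \<le> k" and b: "0 \<le> b" and ab: "\<bar>a\<bar> + b \<le> 2*k"
    and dv: "(2*(k*k) + 2*k + 1) dvd (a + b*(2*k+1))"
  shows "a = 0 \<and> b = 0"
proof -
  obtain c where c: "a + b*(2*k+1) = (2*(k*k) + 2*k + 1) * c" using dv by (auto elim: dvdE)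
  have bm: "b*(2*k+1) = 2*(b*k) + b" by (simp add: algebra_simps)
  have bk0: "0 \<le> b*k" using b k by simp
  have bk1: "b*k \<le> 2*(k*k)" using mult_right_mono[of b "2*k" k] ab k by (simp add: algebra_simps)
  have kk: "0 \<le> k*k" by simp
  have "c \<ge> 0"
  proof (rule ccontr)
    assume "\<not> c \<ge> 0"
    then have "(2*(k*k) + 2*k + 1) * c \<le> (2*(k*k) + 2*k + 1) * (-1)"
      using k by (intro mult_left_mono) auto
    then have "(2*(k*k) + 2*k + 1) * c \<le> -(2*(k*k) + 2*k + 1)" by simp
    then show False using c bm bk0 ab b kk by linarith
  qed
  moreover have "c \<le> 1"
  proof (rule ccontr)
    assume "\<not> c \<le> 1"
    then have "(2*(k*k) + 2*k + 1) * c \<ge> (2*(k*k) + 2*k + 1) * 2"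
      using k by (intro mult_left_mono) auto
    then have "(2*(k*k) + 2*k + 1) * c \<ge> 2*(2*(k*k) + 2*k + 1)" by simp
    then have "a + 2 * (b * k) + b \<ge> 2 * (2 * (k * k) + 2 * k + 1)" using c bm by linarith
    then show False using bk1 ab b k abs_ge_self[of a] by simp
  qed
  ultimately consider "c = 0" | "c = 1" by linarith
  then show ?thesis
  proof cases
    case 1
    show ?thesis
    proof (cases "b = 0")
      case True then show ?thesis using c 1 by simp
    next
      case False
      then have b1: "1 \<le> b" using b by simp
      then have "1*k \<le> b*k" using k by (intro mult_right_mono) auto
      then have kb: "k \<le> b*k" by simp
      have "a + b*(2*k+1) = 0" using c 1 by simp
      then have False using b1 kb bm ab b k abs_ge_minus_self[of a] by linarith then show ?thesis by simp
    qed
  next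
    case 2
    have c1: "a + b*(2*k+1) = 2*(k*k) + 2*k + 1" using c 2 by simp
    show ?thesis
    proof (cases "b \<le> k")
      case True
      have "b*k \<le> k*k" using mult_right_mono[OF True, of k] k by simp
      then have False using c1 bm ab b k abs_ge_minus_self[of a] abs_ge_self[of a] by linarith then show ?thesis by simp
    next
      case False
      have "(k+1)*k \<le> b*k" using mult_right_mono[of "k+1" b k] False k by simp
      then have False using False c1 bm ab b k abs_ge_minus_self[of a] abs_ge_self[of a] by (simp add: algebra_simps; linarith) then show ?thesis by simp
    qed
  qed
qed

lemma KL_even:
  fixes k a b :: int
  assumes k: "2 \<le> k" and b: "0 \<le> b" and ab: "\<bar>a\<bar> + b \<le> 2*k - 1"
    and dv: "(2*(k*k)) dvd (a + b*(2*k-1))"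
  shows "a = 0 \<and> b = 0"
proof -
  obtain c where c: "a + b*(2*k-1) = (2*(k*k)) * c" using dv by (auto elim: dvdE)
  have bm: "b*(2*k-1) = 2*(b*k) - b" by (simp add: algebra_simps)
  have bk0: "0 \<le> b*k" using b k by simp
  have bk1: "b*k \<le> 2*(k*k) - k" using mult_right_mono[of b "2*k - 1" k] ab k by (simp add: algebra_simps)
  have "c \<ge> 0"
  proof (rule ccontr)
    assume "\<not> c \<ge> 0"
    then have "(2*(k*k)) * c \<le> (2*(k*k)) * (-1)"
      using k by (intro mult_left_mono) auto
    moreover have "k \<le> k * k" using k by simp
    ultimately show False using c bm bk0 ab b k by linarith
  qed
  moreover have "c \<le> 1"
  proof (rule ccontr)
    assume "\<not> c \<le> 1"
    then have "(2*(k*k)) * c \<ge> (2*(k*k)) * 2"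
      using k by (intro mult_left_mono) auto
    then show False using c bm bk1 ab b k by linarith
  qed
  ultimately consider "c = 0" | "c = 1" by linarith
  then show ?thesis
  proof cases
    case 1
    show ?thesis
    proof (cases "b = 0")
      case True then show ?thesis using c 1 by simp
    next
      case False
      then have b1: "1 \<le> b" using b by simp
      then have "1*k \<le> b*k" using k by (intro mult_right_mono) auto
      moreover have "a + b*(2*k-1) = 0" using c 1 by simp
      ultimately have False using bm ab b k by linarith then show ?thesis by simp
    qed
  next
    case 2
    have c1: "a + b*(2*k-1) = 2*(k*k)" using c 2 by simp
    show ?thesis
    proof (cases "b \<le> k")
      case True
      have "(k - b)*1 \<le> (k - b)*k" using True k by (intro mult_left_mono) auto
      then have "k - b \<le> k*k - b*k" by (simp add: algebra_simps)
      then have False using c1 bm ab b k abs_ge_minus_self[of a] abs_ge_self[of a] by linarith then show ?thesis by simp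
    next
      case False
      have "(k+1)*k \<le> b*k" using mult_right_mono[of "k+1" b k] False k by simp
      then have False using False c1 bm ab b k abs_ge_minus_self[of a] abs_ge_self[of a] by (simp add: algebra_simps; linarith) then show ?thesis by simp
    qed
  qed
qed




definition cE :: "nat \<Rightarrow> nat \<Rightarrow> nat \<Rightarrow> bool" where
  "cE n x y \<longleftrightarrow> x < n \<and> y < n \<and> (int n dvd (int y - int x - 1) \<or> int n dvd (int y - int x + 1))"
definition cA :: "nat \<Rightarrow> nat \<Rightarrow> nat \<Rightarrow> nat \<Rightarrow> bool" where
  "cA n m x y \<longleftrightarrow> x < n \<and> y < n \<and> int n dvd (int y - int x - int m)"

lemma dvd_mod_iff:
  assumes "w < n" shows "(int n dvd (int w - int c)) \<longleftrightarrow> w = c mod n"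
proof -
  have "(int n dvd (int w - int c)) \<longleftrightarrow> int w mod int n = int c mod int n" by (simp add: mod_eq_dvd_iff)
  also have "int w mod int n = int w" using assms by simp
  also have "int c mod int n = int (c mod n)" by (simp add: of_nat_mod)
  finally show ?thesis by simp
qed

lemma idx_lemma:
  fixes i L :: nat assumes "i < L" "3 \<le> L"
  shows "((i + (L-1)) mod L + 1) mod L = i \<and> (i+1) mod L \<noteq> (i + (L-1)) mod L"
proof (cases "i = 0")
  case True
  then show ?thesis using assms by simp
next
  case False
  have e: "i + (L-1) = (i-1) + L" using False assms by simp
  have "(i + (L-1)) mod L = i - 1" unfolding e using assms by simp
  moreover have "(i+1) mod L \<noteq> i - 1"
  proof (cases "i + 1 < L")
    case True then show ?thesis by simp
  next
    case False then have "i + 1 = L" using assms by simp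
    then show ?thesis using assms by simp
  qed
  ultimately show ?thesis using False assms by simp
qed

lemma sum_shift:
  fixes h :: "nat \<Rightarrow> 'b::comm_monoid_add"
  assumes "0 < L" shows "(\<Sum>i<L. h ((i+1) mod L)) = (\<Sum>i<L. h i)"
proof -
  obtain L' where L: "L = Suc L'" using assms by (cases L) auto
  have "(\<Sum>i<Suc L'. h ((i+1) mod Suc L')) = (\<Sum>i<L'. h ((i+1) mod Suc L')) + h ((L'+1) mod Suc L')"
    by simp
  also have "(\<Sum>i<L'. h ((i+1) mod Suc L')) = (\<Sum>i<L'. h (Suc i))"
    by (rule sum.cong) auto
  also have "h ((L'+1) mod Suc L') = h 0" by simp
  also have "(\<Sum>i<L'. h (Suc i)) + h 0 = (\<Sum>i<Suc L'. h i)"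
    unfolding sum.lessThan_Suc_shift by (rule add.commute)
  finally show ?thesis unfolding L .
qed

locale Cn =
  fixes n m g k :: nat
  assumes g3: "3 \<le> g"
    and KL: "\<And>a b::int. 0 \<le> b \<Longrightarrow> \<bar>a\<bar> + b \<le> int g - 1 \<Longrightarrow> int n dvd (a + b * int m) \<Longrightarrow> a = 0 \<and> b = 0"
    and k1: "1 \<le> k" and kg: "k + 1 < g" and nk: "n = k*m + (g - k)" and m1: "1 \<le> m" and mn: "m < n"
begin

lemma gn: "g \<le> n"
proof -
  have "k*1 \<le> k*m" using m1 by (intro mult_le_mono2)
  then have "k \<le> k*m" by simp
  then show ?thesis using nk kg by arith
qed

lemma n3: "3 \<le> n" using gn g3 by simp

lemma dv1: "w = (x+1) mod n \<Longrightarrow> int n dvd (int w - int x - 1)"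
proof -
  assume h: "w = (x+1) mod n"
  have wn: "w < n" using h n3 by simp
  have eq: "int w - int (x+1) = int w - int x - 1" by simp
  show ?thesis using dvd_mod_iff[OF wn, of "x+1"] h unfolding eq by simp
qed

lemma shiftn: "int w - int x + 1 = (int w - int (x + (n-1))) + int n"
  using n3 by (simp add: of_nat_diff)

lemma iffn: "int n dvd (int w - int x + 1) \<longleftrightarrow> int n dvd (int w - int (x + (n-1)))"
  unfolding shiftn by (rule dvd_add_triv_right_iff)

lemma dv2: "w = (x+(n-1)) mod n \<Longrightarrow> int n dvd (int w - int x + 1)"
proof -
  assume h: "w = (x+(n-1)) mod n"
  have wn: "w < n" using h n3 by simp
  show ?thesis unfolding iffn using dvd_mod_iff[OF wn, of "x+(n-1)"] h by simp
qed

lemma E_iff: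
  assumes "x < n" "w < n"
  shows "cE n x w \<longleftrightarrow> w = (x+1) mod n \<or> w = (x+(n-1)) mod n"
proof -
  have eq: "int w - int (x+1) = int w - int x - 1" by simp
  have a: "int n dvd (int w - int x - 1) \<longleftrightarrow> w = (x+1) mod n"
    using dvd_mod_iff[OF assms(2), of "x+1"] unfolding eq .
  have b: "int n dvd (int w - int x + 1) \<longleftrightarrow> w = (x+(n-1)) mod n"
    unfolding iffn using dvd_mod_iff[OF assms(2), of "x+(n-1)"] .
  show ?thesis using a b assms unfolding cE_def by blast
qed

lemma A_iff:
  assumes "x < n" "w < n"
  shows "cA n m x w \<longleftrightarrow> w = (x+m) mod n"
proof -
  have eq: "int w - int (x+m) = int w - int x - int m" by simp
  show ?thesis using dvd_mod_iff[OF assms(2), of "x+m"] assms unfolding cA_def eq by simp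
qed

lemma A_in_iff:
  assumes "x < n" "w < n"
  shows "cA n m w x \<longleftrightarrow> w = (x+(n-m)) mod n"
proof -
  have eq: "int x - int w - int m = -((int w - int (x + (n-m))) + int n)" using mn by (simp add: of_nat_diff)
  have "int n dvd (int x - int w - int m) \<longleftrightarrow> int n dvd (int w - int (x + (n-m)))"
    unfolding eq dvd_minus_iff by (rule dvd_add_triv_right_iff)
  then show ?thesis using dvd_mod_iff[OF assms(2), of "x+(n-m)"] assms unfolding cA_def by simp
qed

lemma KLf: "0 \<le> b \<Longrightarrow> \<bar>a\<bar> + b \<le> 2 \<Longrightarrow> int n dvd (a + b * int m) \<Longrightarrow> a = 0 \<and> b = 0"
  using KL g3 by force

lemma mgr: "mixed_graph {0..<n} (cE n) (cA n m)"
  unfolding mixed_graph_def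
proof (intro conjI allI impI)
  show "finite {0..<n}" by simp
next
  fix u v assume "cE n u v" then show "u \<in> {0..<n}" "v \<in> {0..<n}" unfolding cE_def by auto
next
  fix u v assume "cA n m u v" then show "u \<in> {0..<n}" "v \<in> {0..<n}" unfolding cA_def by auto
next
  fix u v assume h: "cE n u v"
  have e1: "int u - int v - 1 = -(int v - int u + 1)" and e2: "int u - int v + 1 = -(int v - int u - 1)" by simp_all
  show "cE n v u" using h unfolding cE_def e1 e2 dvd_minus_iff by blast
next
  fix u
  show "\<not> cE n u u"
  proof
    assume "cE n u u"
    then have "int n dvd (-1 + 0 * int m) \<or> int n dvd (1 + 0 * int m)" unfolding cE_def by simp
    then show False using KLf[of 0 "-1"] KLf[of 0 1] by auto
  qed
next
  fix u
  show "\<not> cA n m u u"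
  proof
    assume "cA n m u u"
    then have "int n dvd (0 + 1 * int m)" unfolding cA_def by simp
    then show False using KLf[of 1 0] by auto
  qed
next
  fix u v
  show "\<not> (cE n u v \<and> cA n m u v)"
  proof
    assume h: "cE n u v \<and> cA n m u v"
    then have d: "int n dvd (int v - int u - int m)" unfolding cA_def by simp
    from h consider "int n dvd (int v - int u - 1)" | "int n dvd (int v - int u + 1)" unfolding cE_def by blast
    then show False
    proof cases
      case 1
      then have "int n dvd ((int v - int u - 1) - (int v - int u - int m))" using d by (rule dvd_diff)
      then have "int n dvd (-1 + 1 * int m)" by simp
      then show False using KLf[of 1 "-1"] by auto
    next
      case 2
      then have "int n dvd ((int v - int u + 1) - (int v - int u - int m))" using d by (rule dvd_diff)
      then have "int n dvd (1 + 1 * int m)" by simp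
      then show False using KLf[of 1 1] by auto
    qed
  qed
next
  fix u v
  show "\<not> (cA n m u v \<and> cA n m v u)"
  proof
    assume h: "cA n m u v \<and> cA n m v u"
    then have "int n dvd ((int v - int u - int m) + (int u - int v - int m))" unfolding cA_def by (intro dvd_add) auto
    then have "int n dvd -(0 + 2 * int m)" by simp
    then have "int n dvd (0 + 2 * int m)" by (simp only: dvd_minus_iff)
    then show False using KLf[of 2 0] by auto
  qed
qed

end



context Cn begin

lemma degs:
  assumes v: "v \<in> {0..<n}"
  shows "card {w\<in>{0..<n}. cA n m v w} = 1" "card {w\<in>{0..<n}. cA n m w v} = 1"
    "card {w\<in>{0..<n}. cE n v w} = 2"
proof -
  have vn: "v < n" using v by simp
  have "{w\<in>{0..<n}. cA n m v w} = {(v+m) mod n}" using A_iff[OF vn] n3 by auto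
  then show "card {w\<in>{0..<n}. cA n m v w} = 1" by simp
  have "{w\<in>{0..<n}. cA n m w v} = {(v+(n-m)) mod n}" using A_in_iff[OF vn] n3 by auto
  then show "card {w\<in>{0..<n}. cA n m w v} = 1" by simp
  have "{w\<in>{0..<n}. cE n v w} = {(v+1) mod n, (v+(n-1)) mod n}" using E_iff[OF vn] n3 by auto
  moreover have "(v+1) mod n \<noteq> (v+(n-1)) mod n"
  proof
    assume h: "(v+1) mod n = (v+(n-1)) mod n"
    have "int n dvd (int ((v+1) mod n) - int v - 1)" by (rule dv1) simp
    moreover have "int n dvd (int ((v+1) mod n) - int v + 1)" by (rule dv2, rule h)
    ultimately have "int n dvd ((int ((v+1) mod n) - int v + 1) - (int ((v+1) mod n) - int v - 1))"
      by (rule dvd_diff[rotated])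
    then have "int n dvd (2 + 0 * int m)" by simp
    then show False using KLf[of 0 2] by auto
  qed
  ultimately show "card {w\<in>{0..<n}. cE n v w} = 2" by simp
qed

lemma long:
  assumes c: "mixed_cycle (cE n) (cA n m) vs"
  shows "g \<le> length vs"
proof (rule ccontr)
  assume "\<not> g \<le> length vs"
  define L where "L = length vs"
  have Lg: "L < g" using \<open>\<not> g \<le> length vs\<close> unfolding L_def by simp
  have L3: "3 \<le> L" using cycle_len3[OF mgr c] unfolding L_def .
  have st: "\<forall>i<L. mstep (cE n) (cA n m) (vs ! i) (vs ! ((i + 1) mod L))"
    and dist: "distinct vs" using c unfolding mixed_cycle_def L_def by blast+
  define X where "X = (\<lambda>i. int (vs ! i))"
  define Y where "Y = (\<lambda>i. int (vs ! ((i+1) mod L)))"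
  define C where "C = (\<lambda>i. if cA n m (vs ! i) (vs ! ((i+1) mod L)) then 1 else (0::int))"
  define Ee where "Ee = (\<lambda>i. if cA n m (vs ! i) (vs ! ((i+1) mod L)) then 0
      else if int n dvd (Y i - X i - 1) then 1 else (-1::int))"
  have each: "int n dvd (Y i - X i - (Ee i + C i * int m))" if i: "i < L" for i
  proof (cases "cA n m (vs ! i) (vs ! ((i+1) mod L))")
    case True
    then show ?thesis unfolding C_def Ee_def X_def Y_def cA_def by simp
  next
    case False
    then have e: "cE n (vs ! i) (vs ! ((i+1) mod L))" using st i unfolding mstep_def by blast
    show ?thesis
    proof (cases "int n dvd (Y i - X i - 1)")
      case True then show ?thesis using False unfolding C_def Ee_def by simp
    next
      case F2: False
      then have "int n dvd (Y i - X i + 1)" using e unfolding cE_def X_def Y_def by blast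
      then show ?thesis using False F2 unfolding C_def Ee_def by simp
    qed
  qed
  have "int n dvd (\<Sum>i<L. (Y i - X i - (Ee i + C i * int m)))"
    using each by (intro dvd_sum) auto
  moreover have "(\<Sum>i<L. Y i) = (\<Sum>i<L. X i)"
    unfolding X_def Y_def using sum_shift[of L "\<lambda>i. int (vs ! i)"] L3 by simp
  ultimately have "int n dvd (-((\<Sum>i<L. Ee i) + (\<Sum>i<L. C i) * int m))"
    by (simp add: sum_subtractf sum.distrib sum_distrib_right)
  then have dv: "int n dvd ((\<Sum>i<L. Ee i) + (\<Sum>i<L. C i) * int m)" by (simp only: dvd_minus_iff)
  have b0: "0 \<le> (\<Sum>i<L. C i)" unfolding C_def by (intro sum_nonneg) auto
  have "\<bar>\<Sum>i<L. Ee i\<bar> + (\<Sum>i<L. C i) \<le> (\<Sum>i<L. \<bar>Ee i\<bar>) + (\<Sum>i<L. C i)"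
    using sum_abs[of Ee "{..<L}"] by simp
  also have "\<dots> = (\<Sum>i<L. \<bar>Ee i\<bar> + C i)" by (simp add: sum.distrib)
  also have "\<dots> \<le> (\<Sum>i<L. 1)" by (intro sum_mono) (auto simp: Ee_def C_def)
  also have "\<dots> = int L" by simp
  finally have "\<bar>\<Sum>i<L. Ee i\<bar> + (\<Sum>i<L. C i) \<le> int g - 1" using Lg by simp
  then have "(\<Sum>i<L. C i) = 0" using KL[OF b0 _ dv] by blast
  then have C0: "\<forall>i\<in>{..<L}. C i = 0" using sum_nonneg_eq_0_iff[of "{..<L}" C] unfolding C_def by auto
  have allE: "cE n (vs ! i) (vs ! ((i+1) mod L))" if "i < L" for i
  proof -
    have "\<not> cA n m (vs ! i) (vs ! ((i+1) mod L))" using C0 that unfolding C_def by (auto split: if_splits)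
    then show ?thesis using st that unfolding mstep_def by blast
  qed
  have inV: "vs ! i < n" if "i < L" for i using allE[OF that] unfolding cE_def by blast
  have clo: "(z+1) mod n \<in> set vs" if z: "z \<in> set vs" for z
  proof -
    obtain i where i: "i < L" "z = vs ! i" using z unfolding L_def by (auto simp: in_set_conv_nth)
    define j where "j = (i + (L-1)) mod L"
    have jL: "j < L" unfolding j_def using L3 by simp
    have ij: "(j+1) mod L = i" "(i+1) mod L \<noteq> j" using idx_lemma[OF i(1) L3] unfolding j_def by auto
    have i1: "(i+1) mod L < L" using L3 by simp
    have nx: "cE n z (vs ! ((i+1) mod L))" using allE[OF i(1)] i by simp
    have "cE n (vs ! j) z" using allE[OF jL] ij i by simp
    then have pv: "cE n z (vs ! j)" using mg_facts(3)[OF mgr] by blast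
    have ne: "vs ! ((i+1) mod L) \<noteq> vs ! j"
      using ij(2) dist jL i1 unfolding L_def by (simp add: nth_eq_iff_index_eq)
    have zn: "z < n" using inV i by simp
    have a: "vs ! ((i+1) mod L) = (z+1) mod n \<or> vs ! ((i+1) mod L) = (z+(n-1)) mod n"
      using E_iff[OF zn inV[OF i1]] nx by blast
    have b: "vs ! j = (z+1) mod n \<or> vs ! j = (z+(n-1)) mod n"
      using E_iff[OF zn inV[OF jL]] pv by blast
    have "(z+1) mod n = vs ! ((i+1) mod L) \<or> (z+1) mod n = vs ! j" using a b ne by auto
    then show ?thesis using i1 jL unfolding L_def by (auto simp: in_set_conv_nth)
  qed
  have L0: "0 < L" using L3 by simp
  have v0: "vs ! 0 \<in> set vs" "vs ! 0 < n" using nth_mem[of 0 vs] inV[OF L0] L0 unfolding L_def by auto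
  have allin: "(vs ! 0 + t) mod n \<in> set vs" for t
  proof (induction t)
    case 0 then show ?case using v0 by simp
  next
    case (Suc t)
    have "(vs ! 0 + Suc t) mod n = ((vs ! 0 + t) mod n + 1) mod n" by (simp add: mod_Suc_eq)
    then show ?case using clo[OF Suc] by simp
  qed
  have "{0..<n} \<subseteq> set vs"
  proof
    fix z assume "z \<in> {0..<n}"
    then have zn: "z < n" by simp
    have "(vs ! 0 + (n - vs ! 0 + z)) mod n = z" using v0 zn by simp
    then show "z \<in> set vs" using allin[of "n - vs ! 0 + z"] by simp
  qed
  then have "n \<le> card (set vs)" using card_mono[of "set vs" "{0..<n}"] by simp
  also have "card (set vs) = L" using distinct_card[OF dist] unfolding L_def .
  finally show False using Lg gn by simp
qed

end



context Cn begin

definition fw :: "nat \<Rightarrow> nat" where "fw t = (if t \<le> k then t*m else k*m + (t - k))"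

lemma fw_lt: "t < g \<Longrightarrow> fw t < n"
proof -
  assume t: "t < g"
  show ?thesis
  proof (cases "t \<le> k")
    case True
    have a: "t*m \<le> k*m" using True by simp
    have "fw t = t*m" using True unfolding fw_def by simp
    then show ?thesis using a nk kg by arith
  next
    case False then show ?thesis using t nk unfolding fw_def by simp
  qed
qed

lemma fw_mono: "i < j \<Longrightarrow> j < g \<Longrightarrow> fw i < fw j"
proof -
  assume ij: "i < j" and jg: "j < g"
  show ?thesis
  proof (cases "j \<le> k")
    case True
    then show ?thesis using ij m1 unfolding fw_def by simp
  next
    case False
    show ?thesis
    proof (cases "i \<le> k")
      case True
      have a: "i*m \<le> k*m" using True by simp
      have "fw i = i*m" "fw j = k*m + (j - k)" using True False unfolding fw_def by simp_all
      then show ?thesis using a False by arith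
    next
      case F2: False then show ?thesis using False ij unfolding fw_def by simp
    qed
  qed
qed

lemma witness: "mixed_cycle (cE n) (cA n m) (map (\<lambda>t. fw t mod n) [0..<g])"
proof (rule closed_walk_cycle[OF mgr g3])
  show "inj_on (\<lambda>t. fw t mod n) {..<g}"
  proof (rule inj_onI)
    fix i j assume i: "i \<in> {..<g}" and j: "j \<in> {..<g}" and e: "fw i mod n = fw j mod n"
    then have e': "fw i = fw j" using fw_lt by simp
    show "i = j"
    proof (rule ccontr)
      assume "i \<noteq> j"
      then consider "i < j" | "j < i" by linarith
      then show False using fw_mono e' i j by cases (auto dest: fw_mono)
    qed
  qed
next
  have "fw g = n" using nk kg unfolding fw_def by simp
  then show "fw g mod n = fw 0 mod n" unfolding fw_def by simp
next
  show "\<forall>i<g. mstep (cE n) (cA n m) (fw i mod n) (fw (Suc i) mod n)"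
  proof (intro allI impI)
    fix t assume t: "t < g"
    show "mstep (cE n) (cA n m) (fw t mod n) (fw (Suc t) mod n)"
    proof (cases "t < k")
      case True
      have a: "fw t = t*m" "fw (Suc t) = t*m + m" using True unfolding fw_def by simp_all
      have "Suc t < g" using True kg by simp
      then have "cA n m (fw t mod n) (fw (Suc t) mod n)"
        using fw_lt[OF t] fw_lt[of "Suc t"] a unfolding cA_def by simp
      then show ?thesis unfolding mstep_def by blast
    next
      case False
      show ?thesis
      proof (cases "Suc t < g")
        case True
        have a: "fw (Suc t) = fw t + 1" using False unfolding fw_def by auto
        have "cE n (fw t mod n) (fw (Suc t) mod n)"
          using fw_lt[OF t] fw_lt[OF True] a unfolding cE_def by simp
        then show ?thesis unfolding mstep_def by blast
      next
        case F2: False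
        then have tg: "Suc t = g" using t by simp
        have "fw (Suc t) = n" using tg nk kg unfolding fw_def by simp
        moreover have "fw t + 1 = n" using tg nk kg False unfolding fw_def by simp
        moreover have "int 0 - int (fw t) - 1 = - int n" using \<open>fw t + 1 = n\<close> by simp
        ultimately have "cE n (fw t mod n) (fw (Suc t) mod n)"
          using fw_lt[OF t] n3 unfolding cE_def by (simp del: of_nat_0)
        then show ?thesis unfolding mstep_def by blast
      qed
    qed
  qed
qed

lemma zrg: "zrg_mixed_graph {0..<n} (cE n) (cA n m) 1 2 g"
  unfolding zrg_mixed_graph_def has_girth_def
proof (intro conjI)
  show "mixed_graph {0..<n} (cE n) (cA n m)" by (rule mgr)
  show "\<forall>v\<in>{0..<n}. card {w \<in> {0..<n}. cA n m v w} = 1 \<and> card {w \<in> {0..<n}. cA n m w v} = 1 \<and>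
        card {w \<in> {0..<n}. cE n v w} = 2" using degs by blast
  show "\<exists>vs. mixed_cycle (cE n) (cA n m) vs \<and> length vs = g"
    using witness by (intro exI[of _ "map (\<lambda>t. fw t mod n) [0..<g]"]) simp
  show "\<forall>vs. mixed_cycle (cE n) (cA n m) vs \<longrightarrow> g \<le> length vs" using long by blast
qed

end



lemma exist_odd:
  fixes k :: nat assumes k1: "1 \<le> k"
  shows "\<exists>(V :: nat set) E A. zrg_mixed_graph V E A 1 2 (2*k+1) \<and> card V = 2*(k*k) + 2*k + 1"
proof -
  interpret Cn "2*(k*k) + 2*k + 1" "2*k+1" "2*k+1" k
  proof
    show "3 \<le> 2*k+1" using k1 by simp
    show "1 \<le> k" by (rule k1)
    show "k + 1 < 2*k+1" using k1 by simp
    show "2*(k*k) + 2*k + 1 = k*(2*k+1) + (2*k+1 - k)" by (simp add: algebra_simps)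
    show "1 \<le> 2*k+1" by simp
    have "1*k \<le> k*k" using k1 by (intro mult_right_mono) auto
    then show "2*k+1 < 2*(k*k) + 2*k + 1" using k1 by simp
  next
    fix a b :: int
    assume b: "0 \<le> b" and ab: "\<bar>a\<bar> + b \<le> int (2*k+1) - 1"
      and dv: "int (2*(k*k) + 2*k + 1) dvd (a + b * int (2*k+1))"
    have ab': "\<bar>a\<bar> + b \<le> 2 * int k" using ab by simp
    have e1: "int (2*(k*k) + 2*k + 1) = 2*(int k * int k) + 2*int k + 1" by simp
    have e2: "int (2*k+1) = 2*int k+1" by simp
    have dv': "(2*(int k * int k) + 2*int k + 1) dvd (a + b*(2*int k+1))" using dv unfolding e1 e2 .
    show "a = 0 \<and> b = 0" using KL_odd[of "int k" b a] k1 b ab' dv' by simp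
  qed
  show ?thesis using zrg by (intro exI[of _ "{0..<2*(k*k) + 2*k + 1}"] exI) simp
qed

lemma exist_even:
  fixes k :: nat assumes k2: "2 \<le> k"
  shows "\<exists>(V :: nat set) E A. zrg_mixed_graph V E A 1 2 (2*k) \<and> card V = 2*(k*k)"
proof -
  interpret Cn "2*(k*k)" "2*k-1" "2*k" k
  proof
    show "3 \<le> 2*k" using k2 by simp
    show "1 \<le> k" using k2 by simp
    show "k + 1 < 2*k" using k2 by simp
    have "k*(2*k-1) + (2*k - k) = k*(2*k-1) + k" by simp
    also have "\<dots> = 2*(k*k)" using k2 by (simp add: algebra_simps diff_mult_distrib2)
    finally show "2*(k*k) = k*(2*k-1) + (2*k - k)" by simp
    show "1 \<le> 2*k-1" using k2 by simp
    have h: "k*2 \<le> k*k" using k2 by (intro mult_le_mono2)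
    show "2*k-1 < 2*(k*k)" using h k2 by arith
  next
    fix a b :: int
    assume b: "0 \<le> b" and ab: "\<bar>a\<bar> + b \<le> int (2*k) - 1"
      and dv: "int (2*(k*k)) dvd (a + b * int (2*k-1))"
    have ab': "\<bar>a\<bar> + b \<le> 2 * int k - 1" using ab by simp
    have m: "int (2*k-1) = 2*int k - 1" using k2 by (simp add: of_nat_diff)
    have dv': "(2*(int k * int k)) dvd (a + b*(2*int k-1))" using dv unfolding m by simp
    show "a = 0 \<and> b = 0" using KL_even[of "int k" b a] k2 b ab' dv' by simp
  qed
  show ?thesis using zrg by (intro exI[of _ "{0..<2*(k*k)}"] exI) simp
qed

theorem theorem7:
  fixes g :: nat
  assumes "g \<ge> 3"
  defines "n \<equiv> (if odd g then (g^2 + 1) div 2 else g^2 div 2)"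
  shows "(\<exists>(V :: nat set) E A. zrg_mixed_graph V E A 1 2 g \<and> card V = n) \<and>
         (\<forall>(V :: 'a set) E A. zrg_mixed_graph V E A 1 2 g \<longrightarrow> n \<le> card V)"
proof
  show "\<exists>(V :: nat set) E A. zrg_mixed_graph V E A 1 2 g \<and> card V = n"
  proof (cases "odd g")
    case True
    then obtain k where k: "g = 2*k+1" by (metis oddE)
    then have k1: "1 \<le> k" using assms(1) by simp
    have "g^2 + 1 = 2 * (2*(k*k) + 2*k + 1)" unfolding k by (simp add: power2_eq_square algebra_simps)
    then have "n = 2*(k*k) + 2*k + 1" unfolding n_def using True by simp
    then show ?thesis using exist_odd[OF k1] k by simp
  next
    case False
    then obtain k where k: "g = 2*k" by (metis evenE)
    then have k2: "2 \<le> k" using assms(1) by simp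
    have "g^2 = 2 * (2*(k*k))" unfolding k by (simp add: power2_eq_square algebra_simps)
    then have "n = 2*(k*k)" unfolding n_def using False by simp
    then show ?thesis using exist_even[OF k2] k by simp
  qed
next
  show "\<forall>(V :: 'a set) E A. zrg_mixed_graph V E A 1 2 g \<longrightarrow> n \<le> card V"
  proof (intro allI impI)
    fix V :: "'a set" and E A
    assume z: "zrg_mixed_graph V E A 1 2 g"
    interpret L12 V E A g using z by unfold_locales
    show "n \<le> card V" using lower[OF assms(1)] nform[OF assms(1)] unfolding n_def by simp
  qed
qed


end
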